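(* Let $\mu$ be an infinite cardinal, $C_\mu=\mu\times\mu$, and $W_\mu=\{(w,w')\in C_\mu^\omega : \text{there is no } i \text{ with } w_i<w_{i+1}\text{ and } w'_i<w'_{i+1}\}$ (where a word over $C_\mu$ is written as a pair of words $(w,w')$ over $\mu$). Then the set $\mathrm{Res}(W_\mu)$ of left quotients of $W_\mu$, ordered by inclusion, is a well-quasi-order.
   Context: For $u\in C^*$, the left quotient of $W\subseteq C^\omega$ by $u$ is $u^{-1}W=\{w\in C^\omega: uw\in W\}$; $\mathrm{Res}(W)$ is the set of all left quotients. A partially ordered set is a well-quasi-order if it is well-founded and has no infinite antichain. *)

theory Defs
  imports Main "HOL-Library.Omega_Words_Fun"
begin

definition left_quot :: "'c list \<Rightarrow> 'c word set \<Rightarrow> 'c word set" where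
  "left_quot u W = {w. u \<frown> w \<in> W}"

definition Res :: "'c word set \<Rightarrow> 'c word set set" where
  "Res W = {left_quot u W | u. True}"

definition wqo_incl :: "'b set set \<Rightarrow> bool" where
  "wqo_incl S \<longleftrightarrow>
     wf {(X, Y). X \<in> S \<and> Y \<in> S \<and> X \<subset> Y} \<and>
     \<not> (\<exists>A. A \<subseteq> S \<and> infinite A \<and>
            (\<forall>X\<in>A. \<forall>Y\<in>A. X \<noteq> Y \<longrightarrow> \<not> X \<subseteq> Y \<and> \<not> Y \<subseteq> X))"

text \<open>The language W_mu over the alphabet mu x mu, where a letter is a pair and an
  omega-word w over mu x mu corresponds to the pair (fst o w, snd o w).\<close>
definition W_mu :: "('a::wellorder \<times> 'a) word set" where
  "W_mu = {w. \<not> (\<exists>i. fst (w i) < fst (w (Suc i)) \<and> snd (w i) < snd (w (Suc i)))}"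

text \<open>The well-order on type 'a is (the order of) an infinite cardinal mu:
  infinite, and every proper initial segment has strictly smaller cardinality.\<close>
definition is_inf_cardinal_order :: "'a::wellorder itself \<Rightarrow> bool" where
  "is_inf_cardinal_order _ \<longleftrightarrow> infinite (UNIV :: 'a set) \<and>
     (\<forall>x::'a. (card_of {y. y < x}, card_of (UNIV :: 'a set)) \<in> ordLess)"

end

theory Submission
  imports Defs Complex_Main
begin

lemma wo_incsub:
  fixes s :: "nat \<Rightarrow> 'a::wellorder"
  shows "\<exists>f. strict_mono f \<and> incseq (s \<circ> f)"
proof -
  obtain f where f: "strict_mono f" "monoseq (\<lambda>n. s (f n))" using seq_monosub by blast
  show ?thesis
  proof (cases "incseq (\<lambda>n. s (f n))")
    case True then show ?thesis using f by (auto simp: comp_def)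
  next
    case False
    then have d: "decseq (\<lambda>n. s (f n))" using f(2) monoseq_iff by blast
    define m where "m = (LEAST x. x \<in> range (\<lambda>n. s (f n)))"
    have "m \<in> range (\<lambda>n. s (f n))" unfolding m_def by (rule LeastI) auto
    then obtain n where n: "s (f n) = m" by auto
    have lm: "\<And>k. m \<le> s (f k)" unfolding m_def by (rule Least_le) auto
    have c: "\<And>k. s (f (k + n)) = m"
    proof -
      fix k
      have "s (f (k + n)) \<le> s (f n)" using d by (simp add: decseq_def)
      then show "s (f (k + n)) = m" using lm[of "k + n"] n by simp
    qed
    show ?thesis
      by (rule exI[of _ "\<lambda>k. f (k + n)"]) (use f(1) c in \<open>auto simp: strict_mono_def incseq_def\<close>)
  qed
qed

lemma dickson:
  fixes s :: "nat \<Rightarrow> ('a::wellorder \<times> 'b::wellorder)"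
  shows "\<exists>i j. i < j \<and> fst (s i) \<le> fst (s j) \<and> snd (s i) \<le> snd (s j)"
proof -
  obtain f :: "nat \<Rightarrow> nat" where f: "strict_mono f" "incseq ((\<lambda>n. fst (s n)) \<circ> f)"
    using wo_incsub[of "\<lambda>n. fst (s n)"] by blast
  obtain g :: "nat \<Rightarrow> nat" where g: "strict_mono g" "incseq ((\<lambda>n. snd (s (f n))) \<circ> g)"
    using wo_incsub[of "\<lambda>n. snd (s (f n))"] by blast
  have "f (g 0) < f (g 1)" using f(1) g(1) by (simp add: strict_mono_def)
  moreover have "fst (s (f (g 0))) \<le> fst (s (f (g 1)))"
    using f(2) g(1) by (simp add: incseq_def strict_mono_less_eq)
  moreover have "snd (s (f (g 0))) \<le> snd (s (f (g 1)))"
    using g(2) by (simp add: incseq_def)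
  ultimately show ?thesis by blast
qed

definition incp :: "('a::wellorder \<times> 'a) \<Rightarrow> ('a \<times> 'a) \<Rightarrow> bool" where
  "incp a b \<longleftrightarrow> fst a < fst b \<and> snd a < snd b"

definition Qc :: "('a::wellorder \<times> 'a) \<Rightarrow> ('a \<times> 'a) word set" where
  "Qc c = {w. w \<in> W_mu \<and> \<not> incp c (w 0)}"

lemma W_mu_iff: "w \<in> W_mu \<longleftrightarrow> (\<forall>i. \<not> incp (w i) (w (Suc i)))"
  by (auto simp: W_mu_def incp_def)

lemma conc_W:
  assumes "u \<noteq> []"
  shows "u \<frown> w \<in> W_mu \<longleftrightarrow>
    (\<forall>i. Suc i < length u \<longrightarrow> \<not> incp (u!i) (u!Suc i)) \<and> \<not> incp (last u) (w 0) \<and> w \<in> W_mu"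
proof -
  have lastu: "u ! (length u - 1) = last u" using assms by (simp add: last_conv_nth)
  have "(\<forall>i. \<not> incp ((u \<frown> w) i) ((u \<frown> w) (Suc i))) \<longleftrightarrow>
    (\<forall>i. Suc i < length u \<longrightarrow> \<not> incp (u!i) (u!Suc i)) \<and> \<not> incp (last u) (w 0) \<and> (\<forall>i. \<not> incp (w i) (w (Suc i)))"
  proof safe
    fix i assume h: "\<forall>i. \<not> incp ((u \<frown> w) i) ((u \<frown> w) (Suc i))" "Suc i < length u" "incp (u ! i) (u ! Suc i)"
    then show False using h(1)[rule_format, of i] by simp
  next
    assume h: "\<forall>i. \<not> incp ((u \<frown> w) i) ((u \<frown> w) (Suc i))" "incp (last u) (w 0)"
    then show False using h(1)[rule_format, of "length u - 1"] assms lastu by simp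
  next
    fix i assume h: "\<forall>i. \<not> incp ((u \<frown> w) i) ((u \<frown> w) (Suc i))" "incp (w i) (w (Suc i))"
    then show False using h(1)[rule_format, of "length u + i"] by simp
  next
    fix i assume h: "\<forall>i. Suc i < length u \<longrightarrow> \<not> incp (u ! i) (u ! Suc i)"
      "\<not> incp (last u) (w 0)" "\<forall>i. \<not> incp (w i) (w (Suc i))"
      "incp ((u \<frown> w) i) ((u \<frown> w) (Suc i))"
    consider "Suc i < length u" | "Suc i = length u" | "length u \<le> i" by linarith
    then show False
    proof cases
      case 1 then show ?thesis using h by simp
    next
      case 2
      then have "u ! i = last u" using lastu by (metis diff_Suc_1)
      then show ?thesis using h 2 by simp
    next
      case 3
      then have "Suc i - length u = Suc (i - length u)" by simp
      then show ?thesis using h 3 by simp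
    qed
  qed
  then show ?thesis by (simp add: W_mu_iff)
qed

lemma Res_cases:
  assumes "X \<in> Res (W_mu :: ('a::wellorder \<times> 'a) word set)"
  shows "X = {} \<or> X = W_mu \<or> (\<exists>c. X = Qc c)"
proof -
  obtain u where X: "X = left_quot u (W_mu :: ('a \<times> 'a) word set)" using assms by (auto simp: Res_def)
  show ?thesis
  proof (cases "u = []")
    case True then show ?thesis using X by (simp add: left_quot_def)
  next
    case False
    show ?thesis
    proof (cases "\<forall>i. Suc i < length u \<longrightarrow> \<not> incp (u!i) (u!Suc i)")
      case True
      then have "X = Qc (last u)" using X conc_W[OF False] by (auto simp: left_quot_def Qc_def)
      then show ?thesis by blast
    next
      case F2: False
      then have "X = {}" using X conc_W[OF False] by (auto simp: left_quot_def)
      then show ?thesis by blast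
    qed
  qed
qed

lemma Qc_mono:
  assumes "fst c \<le> fst d" "snd c \<le> snd d"
  shows "Qc c \<subseteq> Qc d"
  using assms by (auto simp: Qc_def incp_def)

lemma Res_sub: "X \<in> Res (W_mu :: ('a::wellorder \<times> 'a) word set) \<Longrightarrow> X \<subseteq> W_mu"
  using Res_cases[of X] by (auto simp: Qc_def)

theorem lemma5p3:
  assumes "is_inf_cardinal_order TYPE('a::wellorder)"
  shows "wqo_incl (Res (W_mu :: ('a \<times> 'a) word set))"
proof -
  let ?R = "Res (W_mu :: ('a \<times> 'a) word set)"
  have wf: "wf {(X, Y). X \<in> ?R \<and> Y \<in> ?R \<and> X \<subset> Y}"
    unfolding wf_iff_no_infinite_down_chain
  proof
    assume "\<exists>f. \<forall>i. (f (Suc i), f i) \<in> {(X, Y). X \<in> ?R \<and> Y \<in> ?R \<and> X \<subset> Y}"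
    then obtain f where f: "\<And>i. f i \<in> ?R" "\<And>i. f (Suc i) \<subset> f i" by blast
    have dec: "f j \<subset> f i" if "i < j" for i j
      using that
    proof (induction j rule: less_induct)
      case (less j)
      then obtain k where k: "j = Suc k" by (cases j) auto
      show ?case
      proof (cases "i = k")
        case True then show ?thesis using f(2) k by simp
      next
        case False then have "f k \<subset> f i" using less k by simp
        then show ?thesis using f(2)[of k] k by blast
      qed
    qed
    have "\<exists>c. f (Suc n) = Qc c" for n
    proof -
      have "f (Suc n) \<noteq> W_mu" using f(2)[of n] Res_sub[OF f(1)[of n]] by blast
      moreover have "f (Suc n) \<noteq> {}" using f(2)[of "Suc n"] by blast
      ultimately show ?thesis using Res_cases[OF f(1)[of "Suc n"]] by blast
    qed
    then obtain c where c: "\<And>n. f (Suc n) = Qc (c n)" by metis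
    obtain i j where ij: "i < j" "fst (c i) \<le> fst (c j)" "snd (c i) \<le> snd (c j)"
      using dickson by blast
    have "f (Suc i) \<subseteq> f (Suc j)" using c Qc_mono[OF ij(2,3)] by simp
    moreover have "f (Suc j) \<subset> f (Suc i)" using dec ij(1) by simp
    ultimately show False by blast
  qed
  have nac: "\<not> (\<exists>A. A \<subseteq> ?R \<and> infinite A \<and>
            (\<forall>X\<in>A. \<forall>Y\<in>A. X \<noteq> Y \<longrightarrow> \<not> X \<subseteq> Y \<and> \<not> Y \<subseteq> X))"
  proof
    assume "\<exists>A. A \<subseteq> ?R \<and> infinite A \<and>
            (\<forall>X\<in>A. \<forall>Y\<in>A. X \<noteq> Y \<longrightarrow> \<not> X \<subseteq> Y \<and> \<not> Y \<subseteq> X)"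
    then obtain A where A: "A \<subseteq> ?R" "infinite A"
      and A3: "\<forall>X\<in>A. \<forall>Y\<in>A. X \<noteq> Y \<longrightarrow> \<not> X \<subseteq> Y \<and> \<not> Y \<subseteq> X" by (elim exE conjE)
    have "infinite (A - {{}, W_mu})" using A(2) by (intro Diff_infinite_finite) auto
    then obtain h :: "nat \<Rightarrow> _" where h: "inj h" "range h \<subseteq> A - {{}, W_mu}"
      unfolding infinite_iff_countable_subset by (elim exE conjE)
    have "\<exists>c. h n = Qc c" for n
    proof -
      have "h n \<in> A" "h n \<noteq> {}" "h n \<noteq> W_mu" using h(2) by auto
      then show ?thesis using A(1) Res_cases[of "h n"] by auto
    qed
    then obtain c where c: "\<And>n. h n = Qc (c n)" by metis
    obtain i j where ij: "i < j" "fst (c i) \<le> fst (c j)" "snd (c i) \<le> snd (c j)"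
      using dickson by blast
    have "h i \<subseteq> h j" using c Qc_mono[OF ij(2,3)] by simp
    moreover have "h i \<noteq> h j" using h(1) ij(1) by (metis less_irrefl injD)
    moreover have "h i \<in> A" "h j \<in> A" using h(2) by auto
    ultimately show False using A3 by blast
  qed
  show ?thesis unfolding wqo_incl_def using wf nac by blast
qed

end
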